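(* Define, for real $f<1$ and real $w$, $$G_0(w,f)=(1-f)\,y\left(\tfrac12-y\right),\qquad y=1-\frac{w}{1-f}$$ (equivalently $G_0(w,f)=\frac{1-f}{\Phi(1-\frac{w}{1-f})}$ with $\Phi(x)=\frac{1}{x(\frac12-x)}$). Then $G_0$ is concave on the region $\{(w,f): f\in[0,\frac12],\ \frac{1-f}{2}\le w\le 1-f\}$; hence for every $n\ge1$ and all $w_i,f_i$ with $f_i\in[0,\frac12]$ and $\frac{1-f_i}{2}\le w_i\le 1-f_i$ ($i=1,\dots,n$), $$\frac{G_0(w_1,f_1)+\cdots+G_0(w_n,f_n)}{n}\le G_0\!\left(\frac{w_1+\cdots+w_n}{n},\frac{f_1+\cdots+f_n}{n}\right).$$ *)

theory Defs
  imports "HOL-Analysis.Analysis"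
begin

definition G0 :: "real \<Rightarrow> real \<Rightarrow> real" where
  "G0 w f = (let y = 1 - w / (1 - f) in (1 - f) * y * (1/2 - y))"

definition G0_region :: "(real \<times> real) set" where
  "G0_region = {(w, f). 0 \<le> f \<and> f \<le> 1/2 \<and> (1 - f) / 2 \<le> w \<and> w \<le> 1 - f}"

end

theory Submission
  imports Defs
begin

lemma key:
  fixes u1 u2 t :: real
  assumes "u1 > 0" "u2 > 0" "0 \<le> t" "t \<le> 1"
  shows "(t * w1+(1-t) * w2)^2/(t * u1+(1-t) * u2) \<le> t * (w1^2/u1) + (1-t) * (w2^2/u2)"
proof -
  define r where "r = 1 - t"
  define A where "A = w1^2/u1"
  define B where "B = w2^2/u2"
  have r: "r \<ge> 0" using assms by (auto simp: r_def)
  have U: "t * u1+r * u2 > 0"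
  proof (cases "t = 0")
    case True then show ?thesis using assms by (simp add: r_def)
  next
    case False then have "t * u1 > 0" using assms by simp
    moreover have "r * u2 \<ge> 0" using r assms by simp
    ultimately show ?thesis by linarith
  qed
  have Au: "A * u1 = w1^2" using assms by (simp add: A_def)
  have Bu: "B * u2 = w2^2" using assms by (simp add: B_def)
  have "(A * u2 + B * u1 - 2 * w1 * w2)  *  (u1 * u2) = (w1 * u2 - w2 * u1)^2"
  proof -
    have "(A * u2 + B * u1 - 2 * w1 * w2)  *  (u1 * u2) = (A * u1) * u2 * u2 + (B * u2) * u1 * u1 - 2 * w1 * w2 * u1 * u2"
      by (simp add: algebra_simps)
    also have "\<dots> = (w1 * u2 - w2 * u1)^2" unfolding Au Bu by (simp add: power2_eq_square algebra_simps)
    finally show ?thesis .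
  qed
  then have P: "A * u2 + B * u1 - 2 * w1 * w2 \<ge> 0"
    using assms by (metis mult_pos_pos zero_le_mult_iff zero_le_power2 not_le)
  have "(t * A + r * B)  *  (t * u1+r * u2) - (t * w1+r * w2)^2
      = t * t * (A * u1) + r * r * (B * u2) + t * r * (A * u2 + B * u1) - (t * w1+r * w2)^2"
    by (simp add: algebra_simps)
  also have "\<dots> = t * r * (A * u2 + B * u1 - 2 * w1 * w2)"
    unfolding Au Bu by (simp add: power2_eq_square algebra_simps)
  also have "\<dots> \<ge> 0" using P r assms by simp
  finally have "(t * w1+r * w2)^2 \<le> (t * A + r * B)  *  (t * u1+r * u2)" by simp
  then show ?thesis using U unfolding A_def[symmetric] B_def[symmetric] r_def[symmetric]
    by (simp add: divide_le_eq)
qed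

lemma G0_alt: "f < 1 \<Longrightarrow> G0 w f = 3/2*w - (1-f)/2 - w^2/(1-f)"
proof -
  assume "f < 1" then have u: "1 - f \<noteq> 0" by simp
  have 1: "(1-f) * (1 - w/(1-f)) = (1-f) - w" using u by (simp add: field_simps)
  define z where "z = w/(1-f)"
  have "G0 w f = ((1-f) - w) * (z - 1/2)" unfolding G0_def Let_def 1[symmetric] z_def by simp
  also have "\<dots> = - (w * z) + (1-f)*z - (1-f)/2 + w/2" by (simp add: field_simps)
  also have "(1-f)*z = w" using u by (simp add: z_def)
  also have "w * z = w^2/(1-f)" by (simp add: z_def power2_eq_square)
  finally show ?thesis by simp
qed
lemma region_convex: "convex G0_region"
proof (rule convexI)
  fix x y :: "real \<times> real" and a b :: real
  assume x: "x \<in> G0_region" and y: "y \<in> G0_region" and ab: "0 \<le> a" "0 \<le> b" "a + b = 1"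
  obtain w f where x': "x = (w,f)" by (cases x)
  obtain w2 f2 where y': "y = (w2,f2)" by (cases y)
  have h: "0 \<le> f" "f \<le> 1/2" "(1 - f)/2 \<le> w" "w \<le> 1 - f" "0 \<le> f2" "f2 \<le> 1/2"
    "(1 - f2)/2 \<le> w2" "w2 \<le> 1 - f2" "0 \<le> a" "0 \<le> b" "a + b = 1"
    using x y x' y' ab by (auto simp: G0_region_def)
  have q: "a*f \<le> a*(1/2)" "b*f2 \<le> b*(1/2)" "a*((1-f)/2) \<le> a*w" "b*((1-f2)/2) \<le> b*w2"
       "a*w \<le> a*(1-f)" "b*w2 \<le> b*(1-f2)" "0 \<le> a*f" "0 \<le> b*f2"
    using h by (simp_all only: mult_left_mono mult_nonneg_nonneg)
  have "0 \<le> a * f + b * f2 \<and> a * f + b * f2 \<le> 1/2 \<and>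
       (1 - (a * f + b * f2)) / 2 \<le> a * w + b * w2 \<and> a * w + b * w2 \<le> 1 - (a * f + b * f2)"
    using q h(11) by (auto simp: algebra_simps)
  then show "a *\<^sub>R x + b *\<^sub>R y \<in> G0_region" unfolding x' y' G0_region_def by simp
qed

lemma conc: "concave_on G0_region (\<lambda>(w, f). G0 w f)"
  unfolding concave_on_iff
proof (intro conjI region_convex ballI allI impI)
  fix x y :: "real \<times> real" and a b :: real
  assume x: "x \<in> G0_region" and y: "y \<in> G0_region" and ab: "0 \<le> a" "0 \<le> b" "a + b = 1"
  obtain w1 f1 where x': "x = (w1,f1)" by (cases x)
  obtain w2 f2 where y': "y = (w2,f2)" by (cases y)
  have f: "f1 \<le> 1/2" "f2 \<le> 1/2" "0 \<le> f1" "0 \<le> f2" using x y x' y' by (auto simp: G0_region_def)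
  have b: "b = 1 - a" using ab by simp
  have eq: "1 - (a*f1 + b*f2) = a*(1-f1) + (1-a)*(1-f2)" unfolding b by (simp add: algebra_simps)
  have lt: "a*f1 + b*f2 < 1"
  proof -
    have "a*f1 \<le> a*(1/2)" "b*f2 \<le> b*(1/2)" using f ab by (simp_all only: mult_left_mono)
    then show ?thesis using ab by linarith
  qed
  have K: "(a*w1+(1-a)*w2)^2/(a*(1-f1)+(1-a)*(1-f2)) \<le> a*(w1^2/(1-f1)) + (1-a)*(w2^2/(1-f2))"
    using key[of "1-f1" "1-f2" a w1 w2] f ab b by simp
  define W where "W = a*w1+(1-a)*w2"
  define F where "F = a*f1+(1-a)*f2"
  have F1: "F < 1" using lt by (simp add: F_def b)
  have eqF: "1 - F = a*(1-f1) + (1-a)*(1-f2)" by (simp add: F_def algebra_simps)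
  have sc: "a *\<^sub>R x + b *\<^sub>R y = (W, F)" unfolding x' y' W_def F_def b by simp
  have K': "W^2/(1-F) \<le> a*(w1^2/(1-f1)) + (1-a)*(w2^2/(1-f2))"
    using K unfolding eqF W_def .
  have g1: "G0 w1 f1 = 3/2*w1 - (1-f1)/2 - w1^2/(1-f1)" using f by (simp add: G0_alt)
  have g2: "G0 w2 f2 = 3/2*w2 - (1-f2)/2 - w2^2/(1-f2)" using f by (simp add: G0_alt)
  have g: "G0 W F = 3/2*W - (1-F)/2 - W^2/(1-F)" using F1 by (simp add: G0_alt)
  have lin: "a * (3/2*w1 - (1-f1)/2) + (1-a) * (3/2*w2 - (1-f2)/2) = 3/2*W - (1-F)/2"
    unfolding W_def F_def by (simp add: field_simps)
  have "a * G0 w1 f1 + (1-a) * G0 w2 f2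
     = (a * (3/2*w1 - (1-f1)/2) + (1-a) * (3/2*w2 - (1-f2)/2))
       - (a*(w1^2/(1-f1)) + (1-a)*(w2^2/(1-f2)))"
    unfolding g1 g2 by (simp add: algebra_simps)
  also have "\<dots> \<le> G0 W F" unfolding lin g using K' by linarith
  finally show "a * (case x of (w, f) \<Rightarrow> G0 w f) + b * (case y of (w, f) \<Rightarrow> G0 w f)
        \<le> (case a *\<^sub>R x + b *\<^sub>R y of (w, f) \<Rightarrow> G0 w f)"
    unfolding sc unfolding x' y' b by (simp only: prod.case)
qed

theorem lemma17:
  shows "concave_on G0_region (\<lambda>(w, f). G0 w f)
    \<and> (\<forall>(n::nat) (w::nat \<Rightarrow> real) (f::nat \<Rightarrow> real).
         n \<ge> 1 \<longrightarrow>
         (\<forall>i\<in>{1..n}. 0 \<le> f i \<and> f i \<le> 1/2 \<and> (1 - f i) / 2 \<le> w i \<and> w i \<le> 1 - f i) \<longrightarrow>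
         (\<Sum>i=1..n. G0 (w i) (f i)) / real n
           \<le> G0 ((\<Sum>i=1..n. w i) / real n) ((\<Sum>i=1..n. f i) / real n))"
proof (intro conjI conc allI impI)
  fix n :: nat and w f :: "nat \<Rightarrow> real"
  assume n: "n \<ge> 1" and h: "\<forall>i\<in>{1..n}. 0 \<le> f i \<and> f i \<le> 1/2 \<and> (1 - f i) / 2 \<le> w i \<and> w i \<le> 1 - f i"
  have "(\<Sum>i\<in>{1..n}. (1/real n) * (\<lambda>(w, f). G0 w f) (w i, f i))
        \<le> (\<lambda>(w, f). G0 w f) (\<Sum>i\<in>{1..n}. (1/real n) *\<^sub>R (w i, f i))"
    by (rule concave_on_sum[OF _ _ conc]) (use n h in \<open>auto simp: G0_region_def\<close>)
  moreover have "(\<Sum>i\<in>{1..n}. (1/real n) *\<^sub>R (w i, f i)) = ((\<Sum>i=1..n. w i) / real n, (\<Sum>i=1..n. f i) / real n)"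
    by (simp add: sum_prod sum_divide_distrib prod_eq_iff fst_sum snd_sum)
  ultimately show "(\<Sum>i=1..n. G0 (w i) (f i)) / real n
           \<le> G0 ((\<Sum>i=1..n. w i) / real n) ((\<Sum>i=1..n. f i) / real n)"
    by (simp add: sum_divide_distrib)
qed

end
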